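(* Let $G$ be a finite group with $|G|\ge3$, let $k,\ell\in\mathbb N$ with $k<\ell$, and let $U_1,\ldots,U_k,V_1,\ldots,V_\ell\in\mathcal A(G)$ with $U_1\boldsymbol{\cdot}\ldots\boldsymbol{\cdot}U_k=V_1\boldsymbol{\cdot}\ldots\boldsymbol{\cdot}V_\ell$. Then there exist $\mu\in[1,k]$, $\lambda,\lambda'\in[1,\ell]$ with $\lambda\ne\lambda'$, and $g_1,g_2\in G$ such that $U_\mu=g_1\boldsymbol{\cdot}g_2\boldsymbol{\cdot}\ldots\boldsymbol{\cdot}g_m$ with $m\ge2$ and $g_1g_2\cdots g_m=1_G$, and $g_1\mid V_\lambda$ and $g_2\mid V_{\lambda'}$ in $\mathcal F(G)$.
   Context: Let $G$ be a finite group written multiplicatively with identity $1_G$. $\mathcal F(G)$ is the free abelian monoid with basis $G$; its elements are sequences $S=g_1\boldsymbol{\cdot}\ldots\boldsymbol{\cdot}g_\ell$ (unordered, repetitions allowed, operation $\boldsymbol{\cdot}$ = concatenation). $\pi(S)=\{g_{\tau(1)}\cdots g_{\tau(\ell)}:\tau\text{ a permutation of }[1,\ell]\}$, $\mathcal B(G)=\{S\in\mathcal F(G):1_G\in\pi(S)\}$, and $\mathcal A(G)$ is the set of atoms (irreducible elements) of the monoid $\mathcal B(G)$. *)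

theory Defs
  imports "HOL-Algebra.Group" "HOL-Library.Multiset"
begin

definition list_prod :: "('a, 'b) monoid_scheme \<Rightarrow> 'a list \<Rightarrow> 'a" where
  "list_prod G xs = foldr (\<lambda>x y. x \<otimes>\<^bsub>G\<^esub> y) xs \<one>\<^bsub>G\<^esub>"

definition seqs :: "('a, 'b) monoid_scheme \<Rightarrow> 'a multiset set" where
  "seqs G = {S. set_mset S \<subseteq> carrier G}"

definition seq_pi :: "('a, 'b) monoid_scheme \<Rightarrow> 'a multiset \<Rightarrow> 'a set" where
  "seq_pi G S = {list_prod G xs | xs. mset xs = S}"

definition prod_one_seqs :: "('a, 'b) monoid_scheme \<Rightarrow> 'a multiset set" where
  "prod_one_seqs G = {S \<in> seqs G. \<one>\<^bsub>G\<^esub> \<in> seq_pi G S}"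

text \<open>A(G): atoms of the monoid B(G), i.e. non-units (the only unit is the empty
  sequence) that are not a product of two non-units of B(G).\<close>
definition atoms :: "('a, 'b) monoid_scheme \<Rightarrow> 'a multiset set" where
  "atoms G = {S \<in> prod_one_seqs G. S \<noteq> {#} \<and>
     (\<forall>A\<in>prod_one_seqs G. \<forall>B\<in>prod_one_seqs G. S = A + B \<longrightarrow> A = {#} \<or> B = {#})}"

end

theory Submission
  imports Defs
begin

lemma lp_carrier: "group G \<Longrightarrow> set xs \<subseteq> carrier G \<Longrightarrow> list_prod G xs \<in> carrier G"
  by (induction xs) (auto simp: list_prod_def group.is_monoid monoid.m_closed monoid.one_closed)

lemma lp_append: "group G \<Longrightarrow> set xs \<subseteq> carrier G \<Longrightarrow> set ys \<subseteq> carrier G \<Longrightarrow>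
   list_prod G (xs @ ys) = list_prod G xs \<otimes>\<^bsub>G\<^esub> list_prod G ys"
proof (induction xs)
  case Nil
  then show ?case using lp_carrier[of G ys] by (simp add: list_prod_def group.is_monoid monoid.l_one)
next
  case (Cons a xs)
  then show ?case using lp_carrier[of G ys] lp_carrier[of G xs]
    by (simp add: list_prod_def group.is_monoid monoid.m_assoc)
qed

lemma lp_rotate1: "group G \<Longrightarrow> set xs \<subseteq> carrier G \<Longrightarrow> list_prod G xs = \<one>\<^bsub>G\<^esub> \<Longrightarrow>
   list_prod G (rotate1 xs) = \<one>\<^bsub>G\<^esub>"
proof (cases xs)
  case (Cons a ys)
  assume g: "group G" and s: "set xs \<subseteq> carrier G" and p: "list_prod G xs = \<one>\<^bsub>G\<^esub>"
  have a: "a \<in> carrier G" and ys: "set ys \<subseteq> carrier G" using s Cons by auto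
  have "a \<otimes>\<^bsub>G\<^esub> list_prod G ys = \<one>\<^bsub>G\<^esub>" using p Cons by (simp add: list_prod_def)
  hence "list_prod G ys \<otimes>\<^bsub>G\<^esub> a = \<one>\<^bsub>G\<^esub>"
    using group.inv_comm[OF g] a lp_carrier[OF g ys] by blast
  moreover have "list_prod G [a] = a" using a g by (simp add: list_prod_def group.is_monoid monoid.r_one)
  ultimately show ?thesis using Cons lp_append[OF g ys, of "[a]"] a by simp
qed simp

lemma lp_rotate: "group G \<Longrightarrow> set xs \<subseteq> carrier G \<Longrightarrow> list_prod G xs = \<one>\<^bsub>G\<^esub> \<Longrightarrow>
   list_prod G (rotate n xs) = \<one>\<^bsub>G\<^esub>"
proof (induction n)
  case (Suc n)
  then show ?case using lp_rotate1[of G "rotate n xs"] by simp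
qed simp

lemma lp_remove1: "group G \<Longrightarrow> set xs \<subseteq> carrier G \<Longrightarrow>
   list_prod G (remove1 \<one>\<^bsub>G\<^esub> xs) = list_prod G xs"
  by (induction xs) (auto simp: list_prod_def group.is_monoid monoid.l_one lp_carrier[unfolded list_prod_def])

lemma mset_rot: "mset (rotate n xs) = mset xs"
proof (induction n)
  case (Suc n)
  then show ?case by (cases "rotate n xs") auto
qed simp

lemma prod_one_intro: "mset xs = R \<Longrightarrow> list_prod G xs = \<one>\<^bsub>G\<^esub> \<Longrightarrow> set_mset R \<subseteq> carrier G \<Longrightarrow> R \<in> prod_one_seqs G"
 unfolding prod_one_seqs_def seqs_def seq_pi_def by force

lemma atom_props: "A \<in> atoms G \<Longrightarrow> \<exists>xs. mset xs = A \<and> list_prod G xs = \<one>\<^bsub>G\<^esub> \<and> set xs \<subseteq> carrier G"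
  unfolding atoms_def prod_one_seqs_def seqs_def seq_pi_def by auto

lemma atom_one: assumes g: "group G" and A: "A \<in> atoms G" and o: "\<one>\<^bsub>G\<^esub> \<in># A"
  shows "A = {#\<one>\<^bsub>G\<^esub>#}"
proof -
  obtain xs where xs: "mset xs = A" "list_prod G xs = \<one>\<^bsub>G\<^esub>" "set xs \<subseteq> carrier G"
    using atom_props[OF A] by blast
  define R where "R = A - {#\<one>\<^bsub>G\<^esub>#}"
  have AR: "A = {#\<one>\<^bsub>G\<^esub>#} + R" using o unfolding R_def by simp
  have "mset (remove1 \<one>\<^bsub>G\<^esub> xs) = R" using xs unfolding R_def by simp
  moreover have "list_prod G (remove1 \<one>\<^bsub>G\<^esub> xs) = \<one>\<^bsub>G\<^esub>" using lp_remove1[OF g xs(3)] xs by simp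
  moreover have "set_mset R \<subseteq> carrier G"
  proof -
    have "set_mset R \<subseteq> set_mset A" using AR by auto
    moreover have "set_mset A = set xs" using xs(1) by auto
    ultimately show ?thesis using xs(3) by blast
  qed
  ultimately have R: "R \<in> prod_one_seqs G" by (rule prod_one_intro)
  have "list_prod G [\<one>\<^bsub>G\<^esub>] = \<one>\<^bsub>G\<^esub>" using g by (simp add: list_prod_def group.is_monoid monoid.r_one monoid.one_closed)
  hence O: "{#\<one>\<^bsub>G\<^esub>#} \<in> prod_one_seqs G"
    unfolding prod_one_seqs_def seqs_def seq_pi_def using g
    by (auto simp: group.is_monoid monoid.one_closed intro!: exI[of _ "[\<one>\<^bsub>G\<^esub>]"])
  have "R = {#}" using A R O AR unfolding atoms_def by auto
  thus ?thesis using AR by simp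
qed

lemma atom_single: assumes g: "group G" and A: "A \<in> atoms G" and "size A = 1"
  shows "A = {#\<one>\<^bsub>G\<^esub>#}"
proof -
  obtain xs where xs: "mset xs = A" "list_prod G xs = \<one>\<^bsub>G\<^esub>" "set xs \<subseteq> carrier G"
    using atom_props[OF A] by blast
  then obtain a where "xs = [a]" using assms(3)
  proof -
    have "length xs = 1" using assms(3) xs(1) by (metis size_mset)
    thus ?thesis using that by (cases xs) auto
  qed
  then have "a = \<one>\<^bsub>G\<^esub>" using xs g by (simp add: list_prod_def group.is_monoid monoid.r_one)
  thus ?thesis using xs \<open>xs = [a]\<close> by simp
qed

lemma atom_count: "group G \<Longrightarrow> A \<in> atoms G \<Longrightarrow>
   count A \<one>\<^bsub>G\<^esub> = (if A = {#\<one>\<^bsub>G\<^esub>#} then 1 else 0)"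
proof (cases "\<one>\<^bsub>G\<^esub> \<in># A")
  case True
  assume "group G" "A \<in> atoms G"
  then show ?thesis using atom_one[of G A] True by simp
next
  case False
  then have "A \<noteq> {#\<one>\<^bsub>G\<^esub>#}" by auto
  then show ?thesis using False by (simp add: not_in_iff)
qed

lemma key:
  assumes g: "group G" and A: "A \<in> atoms G" and A1: "A \<noteq> {#\<one>\<^bsub>G\<^esub>#}"
    and cover: "\<forall>x\<in>#A. \<exists>j\<in>J. x \<in># V j"
    and nogood: "\<not>(\<exists>gs. length gs \<ge> 2 \<and> mset gs = A \<and> list_prod G gs = \<one>\<^bsub>G\<^esub>
        \<and> (\<exists>a\<in>J. \<exists>b\<in>J. a \<noteq> b \<and> gs ! 0 \<in># V a \<and> gs ! 1 \<in># V b))"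
  shows "\<exists>c\<in>J. \<forall>x\<in>#A. \<forall>j\<in>J. x \<in># V j \<longrightarrow> j = c"
proof -
  obtain xs where xs: "mset xs = A" "list_prod G xs = \<one>\<^bsub>G\<^esub>" "set xs \<subseteq> carrier G"
    using atom_props[OF A] by blast
  define m where "m = length xs"
  have "A \<noteq> {#}" using A unfolding atoms_def by auto
  hence "m \<noteq> 0" using xs unfolding m_def by auto
  moreover have "m \<noteq> 1" using atom_single[OF g A] A1 xs(1) unfolding m_def by auto
  ultimately have m2: "m \<ge> 2" by linarith
  define S where "S i = {j\<in>J. xs ! i \<in># V j}" for i
  have Sne: "S i \<noteq> {}" if "i < m" for i
  proof -
    have "xs ! i \<in># A" using xs(1) that unfolding m_def by (metis nth_mem set_mset_mset)
    then show ?thesis using cover unfolding S_def by auto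
  qed
  have pair: "a = b" if "i < m" "a \<in> S i" "b \<in> S ((i+1) mod m)" for i a b
  proof (rule ccontr)
    assume ab: "a \<noteq> b"
    define gs where "gs = rotate i xs"
    have "length gs \<ge> 2" using m2 unfolding gs_def m_def by simp
    moreover have "mset gs = A" unfolding gs_def using mset_rot[of i xs] xs(1) by (rule trans)
    moreover have "list_prod G gs = \<one>\<^bsub>G\<^esub>" using lp_rotate[OF g xs(3) xs(2)] unfolding gs_def by simp
    moreover have "gs ! 0 = xs ! i" proof -
      have "xs \<noteq> []" using m2 unfolding m_def by auto
      then show ?thesis using nth_rotate[of 0 xs i] that(1) unfolding gs_def m_def by simp
    qed
    moreover have "gs ! 1 = xs ! ((i+1) mod m)" using nth_rotate[of 1 xs i] m2 unfolding gs_def m_def by simp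
    moreover have "a \<in> J" "xs ! i \<in># V a" using that(2) unfolding S_def by auto
    moreover have "b \<in> J" "xs ! ((i+1) mod m) \<in># V b" using that(3) unfolding S_def by auto
    ultimately have "\<exists>gs. length gs \<ge> 2 \<and> mset gs = A \<and> list_prod G gs = \<one>\<^bsub>G\<^esub>
        \<and> (\<exists>a\<in>J. \<exists>b\<in>J. a \<noteq> b \<and> gs ! 0 \<in># V a \<and> gs ! 1 \<in># V b)"
      using ab by metis
    then show False using nogood by blast
  qed
  obtain c where c: "c \<in> S 0" using Sne[of 0] m2 by auto
  have all: "S i = {c}" if "i < m" for i
    using that
  proof (induction i)
    case 0
    have "S 0 \<subseteq> {c}"
    proof
      fix a assume a: "a \<in> S 0"
      obtain b where b: "b \<in> S 1" using Sne[of 1] m2 by auto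
      have "a = b" using pair[of 0 a b] a b m2 by simp
      moreover have "c = b" using pair[of 0 c b] c b m2 by simp
      ultimately show "a \<in> {c}" by simp
    qed
    then show ?case using c by auto
  next
    case (Suc i)
    then have Si: "S i = {c}" by simp
    have "S (Suc i) \<subseteq> {c}"
    proof
      fix b assume b: "b \<in> S (Suc i)"
      have "c = b" using pair[of i c b] Si b Suc.prems by simp
      then show "b \<in> {c}" by simp
    qed
    then show ?case using Sne[OF Suc.prems] by auto
  qed
  have "c \<in> J" using c unfolding S_def by simp
  moreover have "\<forall>x\<in>#A. \<forall>j\<in>J. x \<in># V j \<longrightarrow> j = c"
  proof (intro ballI impI)
    fix x j assume x: "x \<in># A" and j: "j \<in> J" and xj: "x \<in># V j"
    obtain i where i: "i < m" "xs ! i = x" using x xs(1) unfolding m_def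
      by (metis in_set_conv_nth set_mset_mset)
    have "j \<in> S i" using i j xj unfolding S_def by simp
    then show "j = c" using all[OF i(1)] by simp
  qed
  ultimately show ?thesis by blast
qed

lemma count_atoms_one:
  assumes g: "group G" and at: "\<forall>i\<in>I. W i \<in> atoms G" and fin: "finite I"
  shows "count (\<Sum>i\<in>I. W i) \<one>\<^bsub>G\<^esub> = card {i\<in>I. W i = {#\<one>\<^bsub>G\<^esub>#}}"
proof -
  have "count (\<Sum>i\<in>I. W i) \<one>\<^bsub>G\<^esub> = (\<Sum>i\<in>I. count (W i) \<one>\<^bsub>G\<^esub>)" by (rule count_sum)
  also have "\<dots> = (\<Sum>i\<in>I. if W i = {#\<one>\<^bsub>G\<^esub>#} then 1 else 0)"
    using atom_count[OF g] at by (intro sum.cong) auto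
  also have "\<dots> = (\<Sum>i\<in>{i\<in>I. W i = {#\<one>\<^bsub>G\<^esub>#}}. 1)"
    using sum.inter_filter[OF fin, of "\<lambda>_. 1::nat"] by simp
  also have "\<dots> = card {i\<in>I. W i = {#\<one>\<^bsub>G\<^esub>#}}" by simp
  finally show ?thesis .
qed

lemma in_sum_iff: "finite I \<Longrightarrow> x \<in># (\<Sum>i\<in>I. W i) \<longleftrightarrow> (\<exists>i\<in>I. x \<in># W i)"
  using set_mset_sum[of I W] by auto

theorem lemma5p1:
  fixes G (structure) and k l :: nat and U V :: "nat \<Rightarrow> 'a multiset"
  assumes "group G" and "finite (carrier G)" and "card (carrier G) \<ge> 3"
    and "k < l"
    and "\<forall>i\<in>{1..k}. U i \<in> atoms G"
    and "\<forall>j\<in>{1..l}. V j \<in> atoms G"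
    and "(\<Sum>i\<in>{1..k}. U i) = (\<Sum>j\<in>{1..l}. V j)"
  shows "\<exists>mu\<in>{1..k}. \<exists>lam1\<in>{1..l}. \<exists>lam2\<in>{1..l}. lam1 \<noteq> lam2 \<and>
           (\<exists>gs. length gs \<ge> 2 \<and> mset gs = U mu \<and> list_prod G gs = \<one>
                 \<and> gs ! 0 \<in># V lam1 \<and> gs ! 1 \<in># V lam2)"
proof (rule ccontr)
  assume H: "\<not> ?thesis"
  note g = assms(1) and Uat = assms(5) and Vat = assms(6) and sumeq = assms(7)
  define J1 where "J1 = {mu\<in>{1..k}. U mu = {#\<one>#}}"
  define I1 where "I1 = {j\<in>{1..l}. V j = {#\<one>#}}"
  define P where "P mu c \<longleftrightarrow> c \<in> {1..l} \<and> (\<forall>x\<in>#U mu. \<forall>j\<in>{1..l}. x \<in># V j \<longrightarrow> j = c)" for mu c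
  define f where "f mu = (SOME c. P mu c)" for mu
  have fP: "P mu (f mu)" if mu: "mu \<in> {1..k} - J1" for mu
  proof -
    have A: "U mu \<in> atoms G" using Uat mu by auto
    have A1: "U mu \<noteq> {#\<one>#}" using mu unfolding J1_def by auto
    have cov: "\<forall>x\<in>#U mu. \<exists>j\<in>{1..l}. x \<in># V j"
    proof
      fix x assume "x \<in># U mu"
      then have "x \<in># (\<Sum>i\<in>{1..k}. U i)" using mu in_sum_iff[of "{1..k}" x U] by auto
      then show "\<exists>j\<in>{1..l}. x \<in># V j" using sumeq in_sum_iff[of "{1..l}" x V] by simp
    qed
    have nog: "\<not>(\<exists>gs. length gs \<ge> 2 \<and> mset gs = U mu \<and> list_prod G gs = \<one>
        \<and> (\<exists>a\<in>{1..l}. \<exists>b\<in>{1..l}. a \<noteq> b \<and> gs ! 0 \<in># V a \<and> gs ! 1 \<in># V b))"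
      using H mu by blast
    have "\<exists>c. P mu c" using key[OF g A A1 cov nog] unfolding P_def by blast
    then show ?thesis unfolding f_def by (rule someI_ex)
  qed
  have sub: "{1..l} - I1 \<subseteq> f ` ({1..k} - J1)"
  proof
    fix j assume j: "j \<in> {1..l} - I1"
    have Vj: "V j \<in> atoms G" using Vat j by auto
    have Vj1: "V j \<noteq> {#\<one>#}" using j unfolding I1_def by auto
    have "V j \<noteq> {#}" using Vj unfolding atoms_def by auto
    then obtain x where x: "x \<in># V j" by blast
    have x1: "x \<noteq> \<one>" using atom_one[OF g Vj] x Vj1 by auto
    have "x \<in># (\<Sum>j\<in>{1..l}. V j)" using j x in_sum_iff[of "{1..l}" x V] by auto
    then obtain mu where mu: "mu \<in> {1..k}" "x \<in># U mu" using sumeq in_sum_iff[of "{1..k}" x U] by auto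
    have "U mu \<noteq> {#\<one>#}" using mu x1 by auto
    then have muJ: "mu \<in> {1..k} - J1" using mu unfolding J1_def by auto
    have "j = f mu" using fP[OF muJ] mu(2) x j unfolding P_def by auto
    then show "j \<in> f ` ({1..k} - J1)" using muJ by blast
  qed
  have cI: "count (\<Sum>j\<in>{1..l}. V j) \<one> = card I1"
    unfolding I1_def by (rule count_atoms_one[OF g Vat]) simp
  have cJ: "count (\<Sum>i\<in>{1..k}. U i) \<one> = card J1"
    unfolding J1_def by (rule count_atoms_one[OF g Uat]) simp
  have IJ: "card I1 = card J1" using cI cJ sumeq by simp
  have "card ({1..l} - I1) \<le> card (f ` ({1..k} - J1))" using sub by (intro card_mono) auto
  also have "\<dots> \<le> card ({1..k} - J1)" by (rule card_image_le) simp
  finally have le: "card ({1..l} - I1) \<le> card ({1..k} - J1)" .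
  have "card ({1..l} - I1) = l - card I1" unfolding I1_def by (subst card_Diff_subset) auto
  moreover have "card ({1..k} - J1) = k - card J1" unfolding J1_def by (subst card_Diff_subset) auto
  moreover have "card I1 \<le> l"
  proof -
    have "I1 \<subseteq> {1..l}" unfolding I1_def by auto
    then have "card I1 \<le> card {1..l}" by (intro card_mono) auto
    then show ?thesis by simp
  qed
  moreover have "card J1 \<le> k"
  proof -
    have "J1 \<subseteq> {1..k}" unfolding J1_def by auto
    then have "card J1 \<le> card {1..k}" by (intro card_mono) auto
    then show ?thesis by simp
  qed
  ultimately have "l \<le> k" using le IJ by linarith
  then show False using assms(4) by simp
qed

end
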